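(* For every $n\in\mathbb{N}^+$ there is a 2-layer MLP with ReGLU activation, $f(x) = W_2[(W_1x+b_1)\otimes\operatorname{ReLU}(Vx+b_2)]+b$, such that for all $x = [x_1;x_2]\in\mathbb{R}^{2n}$ with $x_1,x_2\in\mathbb{R}^n$, $f(x) = x_1\otimes x_2$.
   Context: $\otimes$ denotes elementwise multiplication, $\operatorname{ReLU}$ is applied elementwise, and $[x_1;x_2]$ denotes concatenation. *)

theory Defs
  imports Complex_Main
begin

text \<open>Vectors in R^d are represented as functions nat => real, only entries with
  index < d being relevant; a (r x c)-matrix is a function nat => nat => real,
  only entries with row index < r and column index < c being relevant.\<close>

definition relu :: "real \<Rightarrow> real" where
  "relu t = max 0 t"

definition mat_vec :: "nat \<Rightarrow> (nat \<Rightarrow> nat \<Rightarrow> real) \<Rightarrow> (nat \<Rightarrow> real) \<Rightarrow> nat \<Rightarrow> real" where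
  "mat_vec c A x = (\<lambda>i. \<Sum>j<c. A i j * x j)"

definition reglu_mlp ::
  "nat \<Rightarrow> nat \<Rightarrow> (nat \<Rightarrow> nat \<Rightarrow> real) \<Rightarrow> (nat \<Rightarrow> real) \<Rightarrow> (nat \<Rightarrow> nat \<Rightarrow> real)
   \<Rightarrow> (nat \<Rightarrow> real) \<Rightarrow> (nat \<Rightarrow> nat \<Rightarrow> real) \<Rightarrow> (nat \<Rightarrow> real) \<Rightarrow> (nat \<Rightarrow> real) \<Rightarrow> nat \<Rightarrow> real"
  where
  "reglu_mlp d m W1 b1 V b2 W2 b x =
     (\<lambda>i. mat_vec m W2
            (\<lambda>k. (mat_vec d W1 x k + b1 k) * relu (mat_vec d V x k + b2 k)) i + b i)"

end

theory Submission
  imports Defs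
begin

lemma sum_ind: "finite A \<Longrightarrow> (\<Sum>j\<in>A. (if j = a then (c::real) else 0) * f j) = (if a \<in> A then c * f a else 0)"
  proof -
  have "(\<Sum>j\<in>A. (if j = a then c else 0) * f j) = (\<Sum>j\<in>A. if j = a then c * f j else 0)"
    by (rule sum.cong) auto
  also assume "finite A"
  then have "(\<Sum>j\<in>A. if j = a then c * f j else 0) = (if a \<in> A then c * f a else 0)"
    by (simp add: sum.delta)
  finally show ?thesis .
qed

theorem mainTheorem7:
  fixes n :: nat
  assumes "n \<ge> 1"
  shows "\<exists>(m::nat) W1 b1 V b2 W2 b.
           \<forall>x :: nat \<Rightarrow> real. \<forall>i<n.
             reglu_mlp (2 * n) m W1 b1 V b2 W2 b x i = x i * x (n + i)"
proof -
  define W1 :: "nat \<Rightarrow> nat \<Rightarrow> real" where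
    "W1 k j = (if j = (if k < n then k else k - n) then 1 else 0)" for k j
  define V :: "nat \<Rightarrow> nat \<Rightarrow> real" where
    "V k j = (if j = (if k < n then n + k else k) then (if k < n then 1 else -1) else 0)" for k j
  define W2 :: "nat \<Rightarrow> nat \<Rightarrow> real" where
    "W2 i k = (if k = i then 1 else if k = n + i then -1 else 0)" for i k
  have "\<forall>x :: nat \<Rightarrow> real. \<forall>i<n.
             reglu_mlp (2 * n) (2*n) W1 (\<lambda>_. 0) V (\<lambda>_. 0) W2 (\<lambda>_. 0) x i = x i * x (n + i)"
  proof (intro allI impI)
    fix x :: "nat \<Rightarrow> real" and i assume i: "i < n"
    define h where "h k = (mat_vec (2*n) W1 x k + 0) * relu (mat_vec (2*n) V x k + 0)" for k
    have W1x: "mat_vec (2*n) W1 x k = x (if k < n then k else k - n)" if "k < 2*n" for k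
      unfolding mat_vec_def W1_def using that by (subst sum_ind) auto
    have Vx: "mat_vec (2*n) V x k = (if k < n then x (n+k) else - x k)" if "k < 2*n" for k
    proof -
      have "mat_vec (2*n) V x k = (\<Sum>j<2*n. (if j = (if k < n then n + k else k) then (if k < n then 1 else -1) else 0) * x j)"
        unfolding mat_vec_def V_def by simp
      also have "\<dots> = (if k < n then x (n+k) else - x k)"
        using that by (subst sum_ind) auto
      finally show ?thesis .
    qed
    have "mat_vec (2*n) W2 h i = (\<Sum>k<2*n. (if k = i then 1 else 0) * h k) + (\<Sum>k<2*n. (if k = n+i then -1 else 0) * h k)"
      unfolding mat_vec_def W2_def by (subst sum.distrib[symmetric]) (rule sum.cong, auto)
    also have "\<dots> = h i - h (n+i)"
      using i by (subst sum_ind, simp)+ simp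
    also have "\<dots> = x i * x (n+i)"
      proof -
      have a: "i < 2*n" "n+i < 2*n" using i by auto
      show ?thesis using i unfolding h_def W1x[OF a(1)] W1x[OF a(2)] Vx[OF a(1)] Vx[OF a(2)]
        by (simp add: relu_def max_def algebra_simps)
    qed
    finally show "reglu_mlp (2 * n) (2*n) W1 (\<lambda>_. 0) V (\<lambda>_. 0) W2 (\<lambda>_. 0) x i = x i * x (n + i)"
      unfolding reglu_mlp_def h_def by simp
  qed
  then show ?thesis by blast
qed

end
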